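(* Let $\mathbf K$ be a commutative field, $p,q\in\mathbb N$ and $A\in\mathrm{Rec}_{p\times q}(\mathbf K)$. Then the set of values $\{A[U,W]:(U,W)\in\mathcal M_{p\times q}\}$ is contained in a subring $\tilde{\mathbf K}\subset\mathbf K$ which is finitely generated as a ring.
   Context: $\mathcal M_{p\times q}$ is the set of pairs $(U,W)$ of words of common length with $U$ over $\{0,\dots,p-1\}$, $W$ over $\{0,\dots,q-1\}$. For $A:\mathcal M_{p\times q}\to\mathbf K$ (values $A[U,W]$), $(\rho(S,T)A)[U,W]=A[US,WT]$. $\mathrm{Rec}_{p\times q}(\mathbf K)$ is the set of $A$ whose linear span of $\{\rho(S,T)A\}$ is finite-dimensional. *)

theory Defs
  imports Main
begin

definition M :: "nat \<Rightarrow> nat \<Rightarrow> (nat list \<times> nat list) set" where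
  "M p q = {(U, W). length U = length W \<and> set U \<subseteq> {..<p} \<and> set W \<subseteq> {..<q}}"

text \<open>Shift operator rho(S,T); a function on M_{p x q} is represented as a
  function on all pairs of lists, restricted to M (set to 0 outside).\<close>
definition rho :: "nat \<Rightarrow> nat \<Rightarrow> nat list \<Rightarrow> nat list \<Rightarrow>
    (nat list \<Rightarrow> nat list \<Rightarrow> 'k::zero) \<Rightarrow> (nat list \<Rightarrow> nat list \<Rightarrow> 'k)" where
  "rho p q S T A = (\<lambda>U W. if (U, W) \<in> M p q then A (U @ S) (W @ T) else 0)"

text \<open>Rec_{p x q}(K): the linear span of {rho(S,T) A : (S,T) in M} is finite-dimensional,
  i.e. contained in the span of a finite family of functions on M.\<close>
definition Rec :: "nat \<Rightarrow> nat \<Rightarrow> (nat list \<Rightarrow> nat list \<Rightarrow> 'k::field) set" where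
  "Rec p q = {A. \<exists>F :: (nat list \<Rightarrow> nat list \<Rightarrow> 'k) set. finite F \<and>
     (\<forall>(S, T) \<in> M p q. \<exists>c. rho p q S T A = (\<lambda>U W. \<Sum>f\<in>F. c f * f U W))}"

inductive_set subring_gen :: "'k::comm_ring_1 set \<Rightarrow> 'k set" for G where
  gen: "x \<in> G \<Longrightarrow> x \<in> subring_gen G"
| zero: "0 \<in> subring_gen G"
| one: "1 \<in> subring_gen G"
| add: "x \<in> subring_gen G \<Longrightarrow> y \<in> subring_gen G \<Longrightarrow> x + y \<in> subring_gen G"
| neg: "x \<in> subring_gen G \<Longrightarrow> - x \<in> subring_gen G"
| mult: "x \<in> subring_gen G \<Longrightarrow> y \<in> subring_gen G \<Longrightarrow> x * y \<in> subring_gen G"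

end

theory Submission
  imports Defs "HOL.Vector_Spaces" "HOL-Library.Function_Algebras"
begin

definition sc :: "'k::field \<Rightarrow> (nat list \<Rightarrow> nat list \<Rightarrow> 'k) \<Rightarrow> (nat list \<Rightarrow> nat list \<Rightarrow> 'k)" where
  "sc c f = (\<lambda>U W. c * f U W)"

interpretation fv: vector_space "sc :: 'k::field \<Rightarrow> _"
  by unfold_locales (auto simp: sc_def fun_eq_iff algebra_simps)

lemma sum_fun_app2: "(\<Sum>v\<in>B. f v) U W = (\<Sum>v\<in>B. f v U W)"
  by (induction B rule: infinite_finite_induct) auto

lemma subring_gen_sum:
  assumes "\<And>v. v \<in> B \<Longrightarrow> f v \<in> subring_gen G"
  shows "(\<Sum>v\<in>B. f v) \<in> subring_gen G"
  using assms
  by (induction B rule: infinite_finite_induct) (auto intro: subring_gen.intros)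

lemma rho_rho:
  assumes "(S', T') \<in> M p q"
  shows "rho p q S' T' (rho p q S T A) = rho p q (S' @ S) (T' @ T) A"
  using assms by (auto simp: rho_def M_def fun_eq_iff)

lemma M_snoc: "(U, W) \<in> M p q \<Longrightarrow> a < p \<Longrightarrow> c < q \<Longrightarrow> (U @ [a], W @ [c]) \<in> M p q"
  by (auto simp: M_def)

lemma M_cons: "(S, T) \<in> M p q \<Longrightarrow> a < p \<Longrightarrow> c < q \<Longrightarrow> (a # S, c # T) \<in> M p q"
  by (auto simp: M_def)

theorem mainTheorem8:
  fixes A :: "nat list \<Rightarrow> nat list \<Rightarrow> 'k::field" and p q :: nat
  assumes "A \<in> Rec p q"
  shows "\<exists>G :: 'k set. finite G \<and> (\<forall>(U, W) \<in> M p q. A U W \<in> subring_gen G)"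
proof -
  obtain F :: "(nat list \<Rightarrow> nat list \<Rightarrow> 'k) set" where fF: "finite F" and
    hF: "\<forall>(S, T) \<in> M p q. \<exists>c. rho p q S T A = (\<lambda>U W. \<Sum>f\<in>F. c f * f U W)"
    using assms unfolding Rec_def by blast
  define Gs where "Gs = {rho p q S T A | S T. (S, T) \<in> M p q}"
  have GsF: "Gs \<subseteq> fv.span F"
  proof
    fix g assume "g \<in> Gs"
    then obtain S T where ST: "(S, T) \<in> M p q" and g: "g = rho p q S T A"
      unfolding Gs_def by blast
    obtain c where "rho p q S T A = (\<lambda>U W. \<Sum>f\<in>F. c f * f U W)" using hF ST by blast
    hence "g = (\<Sum>f\<in>F. sc (c f) f)" using g by (simp add: fun_eq_iff sum_fun_app2 sc_def)
    thus "g \<in> fv.span F" by (simp add: fv.span_sum fv.span_scale fv.span_base)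
  qed
  obtain B where BG: "B \<subseteq> Gs" and indB: "fv.independent B" and GB: "Gs \<subseteq> fv.span B"
    using fv.maximal_independent_subset_extend[OF empty_subsetI fv.independent_empty, of Gs] by metis
  have fB: "finite B" using fv.independent_span_bound[OF fF indB] BG GsF by auto
  define coef where "coef h = (SOME u. h = (\<Sum>v\<in>B. sc (u v) v))" for h
  have coef: "h U W = (\<Sum>v\<in>B. coef h v * v U W)" if "h \<in> Gs" for h U W
  proof -
    have "h \<in> range (\<lambda>u. \<Sum>v\<in>B. sc (u v) v)" using GB that fv.span_finite[OF fB] by auto
    hence "\<exists>u. h = (\<Sum>v\<in>B. sc (u v) v)" by auto
    hence "h = (\<Sum>v\<in>B. sc (coef h v) v)" unfolding coef_def by (rule someI_ex)
    hence "h U W = (\<Sum>v\<in>B. sc (coef h v) v) U W" by simp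
    thus ?thesis by (simp add: sum_fun_app2 sc_def)
  qed
  have Gs_closed: "rho p q [a] [c] g \<in> Gs" if gG: "g \<in> Gs" and ac: "a < p" "c < q" for g a c
  proof -
    obtain S T where ST: "(S, T) \<in> M p q" and g: "g = rho p q S T A"
      using gG unfolding Gs_def by blast
    have "([a], [c]) \<in> M p q" using ac by (auto simp: M_def)
    hence "rho p q [a] [c] g = rho p q (a # S) (c # T) A" using g rho_rho[of "[a]" "[c]" p q S T A] by simp
    thus ?thesis using M_cons[OF ST ac] unfolding Gs_def by blast
  qed
  define H where "H = {rho p q [a] [c] b | a c b. a < p \<and> c < q \<and> b \<in> B}"
  have fH: "finite H"
  proof -
    have "H = (\<lambda>(a, c, b). rho p q [a] [c] b) ` ({..<p} \<times> {..<q} \<times> B)"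
      unfolding H_def by (auto simp: image_iff) force
    thus ?thesis using fB by simp
  qed
  have A0: "rho p q [] [] A \<in> Gs" unfolding Gs_def by (force simp: M_def)
  define Gen where "Gen = (\<lambda>b. b [] []) ` B \<union> (\<lambda>(h, b). coef h b) ` ((insert (rho p q [] [] A) H) \<times> B)"
  have fGen: "finite Gen" unfolding Gen_def using fB fH by auto
  have main: "\<forall>U W. length U = n \<longrightarrow> (U, W) \<in> M p q \<longrightarrow> (\<forall>b\<in>B. b U W \<in> subring_gen Gen)" for n
  proof (induction n)
    case 0
    show ?case
    proof (intro allI impI ballI)
      fix U W b assume "length U = 0" "(U, W) \<in> M p q" "b \<in> B"
      hence "U = []" "W = []" by (auto simp: M_def)
      thus "b U W \<in> subring_gen Gen" using \<open>b \<in> B\<close> unfolding Gen_def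
        by (auto intro: subring_gen.gen)
    qed
  next
    case (Suc n)
    show ?case
    proof (intro allI impI ballI)
      fix U W b assume len: "length U = Suc n" and UW: "(U, W) \<in> M p q" and b: "b \<in> B"
      obtain U' a where U: "U = U' @ [a]" using len by (metis length_Suc_conv_rev)
      have "length W = Suc n" using len UW by (simp add: M_def)
      then obtain W' c where W: "W = W' @ [c]" by (metis length_Suc_conv_rev)
      have UW': "(U', W') \<in> M p q" and a: "a < p" and c: "c < q"
        using UW U W by (auto simp: M_def)
      have hH: "rho p q [a] [c] b \<in> H" unfolding H_def using a c b by blast
      have hG: "rho p q [a] [c] b \<in> Gs" using Gs_closed a c b BG by auto
      have "b U W = rho p q [a] [c] b U' W'" using UW' U W by (simp add: rho_def)
      also have "\<dots> = (\<Sum>v\<in>B. coef (rho p q [a] [c] b) v * v U' W')" using coef[OF hG] .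
      also have "\<dots> \<in> subring_gen Gen"
      proof (rule subring_gen_sum)
        fix v assume v: "v \<in> B"
        have "coef (rho p q [a] [c] b) v \<in> Gen" unfolding Gen_def using hH v by force
        moreover have "v U' W' \<in> subring_gen Gen"
          using Suc.IH UW' U len v by auto
        ultimately show "coef (rho p q [a] [c] b) v * v U' W' \<in> subring_gen Gen"
          by (auto intro: subring_gen.intros)
      qed
      finally show "b U W \<in> subring_gen Gen" .
    qed
  qed
  have "A U W \<in> subring_gen Gen" if UW: "(U, W) \<in> M p q" for U W
  proof -
    have "A U W = rho p q [] [] A U W" using UW by (simp add: rho_def)
    also have "\<dots> = (\<Sum>v\<in>B. coef (rho p q [] [] A) v * v U W)" using coef[OF A0] .
    also have "\<dots> \<in> subring_gen Gen"
    proof (rule subring_gen_sum)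
      fix v assume v: "v \<in> B"
      have "coef (rho p q [] [] A) v \<in> Gen" unfolding Gen_def using v by force
      moreover have "v U W \<in> subring_gen Gen" using main UW v by blast
      ultimately show "coef (rho p q [] [] A) v * v U W \<in> subring_gen Gen"
        by (auto intro: subring_gen.intros)
    qed
    finally show ?thesis .
  qed
  thus ?thesis using fGen by blast
qed

end
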